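(* Assume the standing setting. Let $\epsilon>0$, fix a coarse index $j\in\mathbb Z$, and let $m$ be an integer with $1\le m\le r$. If $|u^0_i-u^0_{i+1}|\le \epsilon/3^{M}$ for all $i\in\mathbb Z$, then $$|v_m-u_m|\le \tfrac32 h+\tfrac34|d_1+d_2|+\big(\min[m,r-m]+3\big)\epsilon .$$
   Context: Standing setting. Let $F:\mathbb R\to\mathbb R$ be continuously differentiable. For a spatial step $\eta>0$, a time step $\tau>0$ and an initial sequence $(z^0_i)_{i\in\mathbb Z}$ of reals, the EFC (Euler forward in time, centered in space) scheme produces $(z^n_i)_{i\in\mathbb Z,\,n\in\mathbb N}$ by $z^{n+1}_i=z^n_i-F'(z^n_i)\frac{\tau}{2\eta}\,(z^n_{i+1}-z^n_{i-1})$. It satisfies the CFL condition if $|F'(z^n_i)|\,\tau/\eta\le 1$ for all $i\in\mathbb Z$, $n\in\mathbb N$. Fix $a\in\mathbb R$, $h>0$, $\Delta t>0$, an integer $N>1$ and an even integer $r\ge 2$; put $k=h/r$, $dt=\Delta t/r$, $M=Nr$. Let $u_0:\mathbb R\to\mathbb R$. The coarse solution $(w^n_j)$ is the EFC scheme with $\eta=h$, $\tau=\Delta t$, $w^0_j=u_0(a+jh)$; the fine solution $(u^n_i)$ is the EFC scheme with $\eta=k$, $\tau=dt$, $u^0_i=u_0(a+ik)$ (so $w^0_j=u^0_{jr}$). Both are assumed to satisfy the CFL condition. Coarse nodes: $x_j=a+jh$. Interpolant: for a fixed coarse index $j$, set $p_1=x_j$, $p_2=x_{j+1}$, $d_1=w^N_j$,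 $d_2=w^N_{j+1}$, let $q$ be the cubic with $q(0)=p_1$, $q(1)=p_2$, $q'(0)=d_1$, $q'(1)=d_2$, and let $v(t)=q'(t)=(6p_1-6p_2+3d_1+3d_2)t^2+(-6p_1+6p_2-4d_1-2d_2)t+d_1$ for $t\in[0,1]$. For $0\le m\le r$ put $v_m=v(m/r)$ and $u_m=u^M_{jr+m}$ (the fine solution at time step $M$ at the fine node $x_j+mk$). *)

theory Defs
  imports Complex_Main
begin

text \<open>EFC scheme (Euler forward in time, centered in space) for the flux with
derivative F', spatial step eta, time step tau, initial data z0 (indexed by int).
efc F' eta tau z0 n i is z^n_i.\<close>
primrec efc :: "(real \<Rightarrow> real) \<Rightarrow> real \<Rightarrow> real \<Rightarrow> (int \<Rightarrow> real) \<Rightarrow> nat \<Rightarrow> int \<Rightarrow> real" where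
  "efc F' eta tau z0 0 i = z0 i"
| "efc F' eta tau z0 (Suc n) i =
     efc F' eta tau z0 n i
     - F' (efc F' eta tau z0 n i) * (tau / (2 * eta))
       * (efc F' eta tau z0 n (i + 1) - efc F' eta tau z0 n (i - 1))"

definition efc_cfl :: "(real \<Rightarrow> real) \<Rightarrow> real \<Rightarrow> real \<Rightarrow> (int \<Rightarrow> real) \<Rightarrow> bool" where
  "efc_cfl F' eta tau z0 \<longleftrightarrow>
     (\<forall>n i. \<bar>F' (efc F' eta tau z0 n i)\<bar> * tau / eta \<le> 1)"

text \<open>Derivative of the cubic Hermite interpolant q with q(0)=p1, q(1)=p2, q'(0)=d1, q'(1)=d2.\<close>
definition hermite_v :: "real \<Rightarrow> real \<Rightarrow> real \<Rightarrow> real \<Rightarrow> real \<Rightarrow> real" where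
  "hermite_v p1 p2 d1 d2 t =
     (6*p1 - 6*p2 + 3*d1 + 3*d2) * t^2 + (-6*p1 + 6*p2 - 4*d1 - 2*d2) * t + d1"

end

theory Submission
  imports Defs
begin

lemma one_step:
  fixes z c :: "int \<Rightarrow> real"
  assumes c: "\<And>i. \<bar>c i\<bar> \<le> 1/2" and d: "\<And>i. \<bar>z i - z (i+1)\<bar> \<le> D"
  shows "\<bar>(z i - c i * (z (i+1) - z (i-1))) - z i\<bar> \<le> D"
    and "\<bar>(z i - c i * (z (i+1) - z (i-1))) - (z (i+1) - c (i+1) * (z (i+1+1) - z (i+1-1)))\<bar> \<le> 3*D"
proof -
  have D0: "0 \<le> D" using d[of 0] by linarith
  have g: "\<bar>c k * (z (k+1) - z (k-1))\<bar> \<le> D" for k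
  proof -
    have "\<bar>z (k+1) - z (k-1)\<bar> \<le> 2*D"
      using d[of k] d[of "k-1"] by (simp add: abs_le_iff)
    hence "\<bar>c k\<bar> * \<bar>z (k+1) - z (k-1)\<bar> \<le> 1/2 * (2*D)"
      by (intro mult_mono c) auto
    thus ?thesis by (simp add: abs_mult)
  qed
  show "\<bar>(z i - c i * (z (i+1) - z (i-1))) - z i\<bar> \<le> D" using g[of i] by simp
  show "\<bar>(z i - c i * (z (i+1) - z (i-1))) - (z (i+1) - c (i+1) * (z (i+1+1) - z (i+1-1)))\<bar> \<le> 3*D"
    using g[of i] g[of "i+1"] d[of i] by (simp add: abs_le_iff)
qed

lemma coef_bound:
  assumes "efc_cfl F' eta tau z0" "eta > 0" "tau > 0" and that: "x = efc F' eta tau z0 n i"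
  shows "\<bar>F' x * (tau / (2*eta))\<bar> \<le> 1/2"
proof -
  have "\<bar>F' x\<bar> * tau / eta \<le> 1" using assms(1) that unfolding efc_cfl_def by blast
  moreover have "\<bar>F' x * (tau / (2*eta))\<bar> = (\<bar>F' x\<bar> * tau / eta) / 2"
    using assms(2,3) by (simp add: abs_mult)
  moreover have "\<And>q::real. q \<le> 1 \<Longrightarrow> q/2 \<le> 1/2" by simp
  ultimately show ?thesis by metis
qed

lemma efc_diff:
  assumes cfl: "efc_cfl F' eta tau z0" and pos: "eta > 0" "tau > 0"
    and d0: "\<And>i. \<bar>z0 i - z0 (i+1)\<bar> \<le> \<delta>"
  shows "\<bar>efc F' eta tau z0 n i - efc F' eta tau z0 n (i+1)\<bar> \<le> 3^n * \<delta>
     \<and> \<bar>efc F' eta tau z0 (Suc n) i - efc F' eta tau z0 n i\<bar> \<le> 3^n * \<delta>"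
proof (induction n arbitrary: i)
  case 0
  have "\<bar>z0 i - z0 (i+1)\<bar> \<le> \<delta>" by (rule d0)
  moreover have "\<bar>efc F' eta tau z0 (Suc 0) i - efc F' eta tau z0 0 i\<bar> \<le> \<delta>"
    using one_step(1)[of "\<lambda>k. F' (z0 k) * (tau / (2*eta))" z0 \<delta> i]
      coef_bound[OF cfl pos _, of _ 0] d0 by simp
  ultimately show ?case by simp
next
  case (Suc n)
  let ?z = "efc F' eta tau z0 n"
  let ?c = "\<lambda>k. F' (?z k) * (tau / (2*eta))"
  have c: "\<And>k. \<bar>?c k\<bar> \<le> 1/2" using coef_bound[OF cfl pos refl] by blast
  have d: "\<And>k. \<bar>?z k - ?z (k+1)\<bar> \<le> 3^n*\<delta>" using Suc by blast
  have "\<bar>efc F' eta tau z0 (Suc n) i - efc F' eta tau z0 (Suc n) (i+1)\<bar> \<le> 3*(3^n*\<delta>)"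
    using one_step(2)[of ?c ?z, OF c d, of i] by simp
  moreover have "\<bar>efc F' eta tau z0 (Suc (Suc n)) i - efc F' eta tau z0 (Suc n) i\<bar> \<le> 3^Suc n*\<delta>"
  proof -
    have dd: "\<And>k. \<bar>efc F' eta tau z0 (Suc n) k - efc F' eta tau z0 (Suc n) (k+1)\<bar> \<le> 3*(3^n*\<delta>)"
      using one_step(2)[of ?c ?z, OF c d] by simp
    let ?z' = "efc F' eta tau z0 (Suc n)"
    let ?c' = "\<lambda>k. F' (?z' k) * (tau / (2*eta))"
    have c': "\<And>k. \<bar>?c' k\<bar> \<le> 1/2" using coef_bound[OF cfl pos refl] by blast
    show ?thesis using one_step(1)[of ?c' ?z', OF c' dd, of i] by simp
  qed
  ultimately show ?case by simp
qed

lemma efc_drift: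
  assumes cfl: "efc_cfl F' eta tau z0" and pos: "eta > 0" "tau > 0"
    and d0: "\<And>i. \<bar>z0 i - z0 (i+1)\<bar> \<le> \<delta>"
  shows "\<bar>efc F' eta tau z0 n i - z0 i\<bar> \<le> (3^n - 1)/2 * \<delta>"
proof (induction n)
  case 0 then show ?case by simp
next
  case (Suc n)
  have "\<bar>efc F' eta tau z0 (Suc n) i - efc F' eta tau z0 n i\<bar> \<le> 3^n * \<delta>"
    using efc_diff[OF cfl pos d0] by blast
  moreover have "(3^Suc n - 1)/2 * \<delta> = (3^n - 1)/2 * \<delta> + 3^n * \<delta>" by (simp add: field_simps)
  ultimately show ?case using Suc by (smt (verit))
qed

lemma spread:
  fixes z :: "int \<Rightarrow> real"
  assumes d: "\<And>i. \<bar>z i - z (i+1)\<bar> \<le> \<delta>"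
  shows "\<bar>z (i + int k) - z i\<bar> \<le> real k * \<delta>"
proof (induction k)
  case 0 then show ?case by simp
next
  case (Suc k)
  have "\<bar>z (i + int k) - z (i + int k + 1)\<bar> \<le> \<delta>" by (rule d)
  moreover have "i + int (Suc k) = i + int k + 1" by simp
  ultimately show ?case using Suc by (simp add: abs_le_iff algebra_simps)
qed

lemma abs4: fixes a b c d :: real shows "\<bar>a - b + c + d\<bar> \<le> \<bar>a\<bar> + \<bar>b\<bar> + \<bar>c\<bar> + \<bar>d\<bar>"
  by arith

lemma abs5: fixes X Y U U' um Z c p q s :: real
  assumes "\<bar>X - U\<bar> \<le> c" "\<bar>Y - U'\<bar> \<le> c" "\<bar>U' - U\<bar> \<le> p" "\<bar>um - Z\<bar> \<le> q" "\<bar>Z - U\<bar> \<le> s"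
  shows "\<bar>(X+Y)/2 - um\<bar> \<le> c + p/2 + q + s"
  using assms unfolding abs_le_iff by argo

lemma lin6: fixes A B c rd e md :: real
 assumes "A \<le> 2 * c + rd" "B \<le> c + rd / 2 + e / 2 + md" "2 * c \<le> e" "rd \<le> e/2" "md \<le> rd" "e > 0"
 shows "A/2 + B \<le> 3*e" using assms by linarith

theorem theorem1:
  fixes F F' :: "real \<Rightarrow> real" and u0 :: "real \<Rightarrow> real"
    and a h \<Delta>t \<epsilon> :: real and N r m :: nat and j :: int
  assumes F_deriv: "\<And>x. (F has_real_derivative F' x) (at x)"
    and F'_cont: "continuous_on UNIV F'"
    and h_pos: "h > 0" and dt_pos: "\<Delta>t > 0"
    and N_gt: "N > 1" and r_even: "even r" and r_ge: "r \<ge> 2"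
    and cfl_coarse: "efc_cfl F' h \<Delta>t (\<lambda>j. u0 (a + real_of_int j * h))"
    and cfl_fine: "efc_cfl F' (h / real r) (\<Delta>t / real r) (\<lambda>i. u0 (a + real_of_int i * (h / real r)))"
    and eps_pos: "\<epsilon> > 0"
    and m_ge: "1 \<le> m" and m_le: "m \<le> r"
    and init_small: "\<And>i::int.
      \<bar>efc F' (h / real r) (\<Delta>t / real r) (\<lambda>i. u0 (a + real_of_int i * (h / real r))) 0 i
       - efc F' (h / real r) (\<Delta>t / real r) (\<lambda>i. u0 (a + real_of_int i * (h / real r))) 0 (i + 1)\<bar>
       \<le> \<epsilon> / 3 ^ (N * r)"
  shows
    "let k = h / real r; dt = \<Delta>t / real r; M = N * r;
         w = efc F' h \<Delta>t (\<lambda>j. u0 (a + real_of_int j * h));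
         u = efc F' k dt (\<lambda>i. u0 (a + real_of_int i * k));
         p1 = a + real_of_int j * h; p2 = a + real_of_int (j + 1) * h;
         d1 = w N j; d2 = w N (j + 1);
         v_m = hermite_v p1 p2 d1 d2 (real m / real r);
         u_m = u M (j * int r + int m)
     in \<bar>v_m - u_m\<bar> \<le> 3/2 * h + 3/4 * \<bar>d1 + d2\<bar> + (real (min m (r - m)) + 3) * \<epsilon>"
proof -
  define zf where "zf = (\<lambda>i. u0 (a + real_of_int i * (h / real r)))"
  define zc where "zc = (\<lambda>j. u0 (a + real_of_int j * h))"
  define \<delta> where "\<delta> = \<epsilon> / 3 ^ (N * r)"
  have rpos: "real r > 0" using r_ge by simp
  have dpos: "\<delta> > 0" unfolding \<delta>_def using eps_pos by simp
  have df: "\<And>i. \<bar>zf i - zf (i+1)\<bar> \<le> \<delta>" using init_small unfolding zf_def \<delta>_def by simp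
  have zc_zf: "zc k = zf (k * int r)" for k
    unfolding zc_def zf_def using rpos by simp
  have dc: "\<And>i. \<bar>zc i - zc (i+1)\<bar> \<le> real r * \<delta>"
  proof -
    fix i
    have "\<bar>zf (i * int r + int r) - zf (i * int r)\<bar> \<le> real r * \<delta>" by (rule spread[of zf, OF df])
    moreover have "(i+1) * int r = i * int r + int r" by (simp add: algebra_simps)
    ultimately show "\<bar>zc i - zc (i+1)\<bar> \<le> real r * \<delta>" unfolding zc_zf by (simp add: abs_minus_commute)
  qed
  have fpos: "h / real r > 0" "\<Delta>t / real r > 0" using rpos h_pos dt_pos by auto
  define X where "X = efc F' h \<Delta>t zc N j"
  define Y where "Y = efc F' h \<Delta>t zc N (j+1)"
  define um where "um = efc F' (h / real r) (\<Delta>t / real r) zf (N*r) (j * int r + int m)"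
  define U where "U = zf (j * int r)"
  define U' where "U' = zf ((j+1) * int r)"
  define c where "c = (3^N - 1)/2 * (real r * \<delta>)"
  have X: "\<bar>X - U\<bar> \<le> c"
    using efc_drift[OF cfl_coarse[folded zc_def] h_pos dt_pos dc, of N j]
    unfolding X_def U_def c_def zc_zf by simp
  have Y: "\<bar>Y - U'\<bar> \<le> c"
    using efc_drift[OF cfl_coarse[folded zc_def] h_pos dt_pos dc, of N "j+1"]
    unfolding Y_def U'_def c_def zc_zf by simp
  have UU: "\<bar>U' - U\<bar> \<le> real r * \<delta>"
    using dc[of j] unfolding U_def U'_def zc_zf[symmetric] by (simp add: abs_minus_commute)
  have um1: "\<bar>um - zf (j * int r + int m)\<bar> \<le> (3^(N*r) - 1)/2 * \<delta>"
    using efc_drift[OF cfl_fine[folded zf_def] fpos df] unfolding um_def by blast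
  have um2: "\<bar>zf (j * int r + int m) - U\<bar> \<le> real m * \<delta>"
    using spread[of zf, OF df] unfolding U_def by blast
  have nat1: "r * 3^N \<le> 3^(N*r)"
  proof -
    have "r < 2^r" by (rule less_exp)
    also have "(2::nat)^r \<le> 3^r" by (rule power_mono) auto
    finally have "r * 3^N \<le> 3^r * 3^N" by simp
    also have "\<dots> = 3^(r+N)" by (simp add: power_add)
    also have "\<dots> \<le> 3^(N*r)"
    proof (rule power_increasing)
      have "2*r \<le> N*r" using N_gt by simp
      moreover have "2*N \<le> N*r" using r_ge by simp
      ultimately show "r + N \<le> N*r" by linarith
    qed auto
    finally show ?thesis .
  qed
  have real1: "real r * 3^N * \<delta> \<le> \<epsilon>"
  proof -
    have "real (r * 3^N) \<le> real (3^(N*r))" using nat1 by (simp only: of_nat_le_iff)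
    hence "real r * 3^N \<le> 3^(N*r)" by simp
    hence "real r * 3^N * \<delta> \<le> 3^(N*r) * \<delta>" using dpos by (intro mult_right_mono) auto
    thus ?thesis unfolding \<delta>_def by simp
  qed
  have N9: "(3::real)^N \<ge> 9"
  proof -
    have "(3::real)^2 \<le> 3^N" using N_gt by (intro power_increasing) auto
    thus ?thesis by simp
  qed
  have rd: "real r * \<delta> \<le> \<epsilon>/2"
  proof -
    have "real r * \<delta> * 9 \<le> real r * \<delta> * 3^N" using N9 dpos rpos by (intro mult_left_mono) auto
    moreover have "real r * \<delta> * 3^N \<le> \<epsilon>" using real1 by (simp add: mult_ac)
    moreover have "0 < real r * \<delta>" using dpos rpos by simp
    ultimately show ?thesis by linarith
  qed
  have md: "real m * \<delta> \<le> real r * \<delta>" using m_le dpos by (intro mult_right_mono) auto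
  have cb: "2*c \<le> \<epsilon>"
  proof -
    have "2*c = real r * \<delta> * 3^N - real r * \<delta>" by (simp add: c_def field_simps)
    moreover have "real r * \<delta> * 3^N \<le> \<epsilon>" using real1 by (simp add: mult_ac)
    moreover have "0 < real r * \<delta>" using dpos rpos by simp
    ultimately show ?thesis by linarith
  qed
  have fb: "(3^(N*r) - 1)/2 * \<delta> \<le> \<epsilon>/2" unfolding \<delta>_def using eps_pos
    by (simp add: field_simps)
  define t where "t = real m / real r"
  have t01: "0 \<le> t" "t \<le> 1" unfolding t_def using rpos m_le by auto
  define v where "v = hermite_v (a + real_of_int j * h) (a + real_of_int (j + 1) * h) X Y t"
  have vid: "v - um = 6*h*(t*(1-t)) - 3*(t*(1-t))*(X+Y) + (1-2*t)*(X-Y)/2 + ((X+Y)/2 - um)"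
    unfolding v_def hermite_v_def by (simp add: field_simps power2_eq_square)
  have tt: "t*(1-t) \<le> 1/4" "0 \<le> t*(1-t)"
  proof -
    have "0 \<le> (t-1/2)^2" by simp
    moreover have "t*(1-t) = 1/4 - (t-1/2)^2" by (simp add: power2_eq_square algebra_simps)
    ultimately show "t*(1-t) \<le> 1/4" by linarith
    show "0 \<le> t*(1-t)" using t01 by simp
  qed
  have b1: "\<bar>6*h*(t*(1-t))\<bar> \<le> 3/2*h" using tt h_pos by (simp add: abs_mult) 
  have b2: "\<bar>3*(t*(1-t))*(X+Y)\<bar> \<le> 3/4*\<bar>X+Y\<bar>"
  proof -
    have nn: "0 \<le> 3*(t*(1-t))" using tt by simp
    have "\<bar>3*(t*(1-t))*(X+Y)\<bar> = \<bar>3*(t*(1-t))\<bar>*\<bar>X+Y\<bar>" by (rule abs_mult)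
    hence "\<bar>3*(t*(1-t))*(X+Y)\<bar> = 3*(t*(1-t))*\<bar>X+Y\<bar>" using abs_of_nonneg[OF nn] by simp
    also have "\<dots> \<le> 3*(1/4)*\<bar>X+Y\<bar>" using tt by (intro mult_right_mono) auto
    finally show ?thesis by simp
  qed
  have b3: "\<bar>(1-2*t)*(X-Y)/2\<bar> \<le> \<bar>X-Y\<bar>/2"
  proof -
    have "\<bar>1-2*t\<bar> * \<bar>X-Y\<bar> \<le> 1 * \<bar>X-Y\<bar>" using t01 by (intro mult_right_mono) auto
    thus ?thesis by (simp add: abs_mult)
  qed
  have main: "\<bar>v - um\<bar> \<le> 3/2*h + 3/4*\<bar>X+Y\<bar> + \<bar>X-Y\<bar>/2 + \<bar>(X+Y)/2 - um\<bar>"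
    unfolding vid using abs4[of "6*h*(t*(1-t))" "3*(t*(1-t))*(X+Y)" "(1-2*t)*(X-Y)/2" "(X+Y)/2 - um"] b1 b2 b3
    by linarith
  have e2: "\<bar>X-Y\<bar> \<le> 2*c + real r * \<delta>" using X Y UU by (smt (verit))
  have e3: "\<bar>(X+Y)/2 - um\<bar> \<le> c + real r * \<delta>/2 + \<epsilon>/2 + real m * \<delta>"
    using abs5[OF X Y UU um1 um2] fb by linarith
  have e1: "\<bar>X-Y\<bar>/2 + \<bar>(X+Y)/2 - um\<bar> \<le> 3 * \<epsilon>"
    by (rule lin6[OF e2 e3 cb rd md eps_pos])
  have "3 * \<epsilon> \<le> (real (min m (r - m)) + 3) * \<epsilon>" using eps_pos by simp
  hence "\<bar>v - um\<bar> \<le> 3/2*h + 3/4*\<bar>X+Y\<bar> + (real (min m (r - m)) + 3) * \<epsilon>"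
    using main e1 by linarith
  thus ?thesis unfolding Let_def v_def X_def Y_def um_def t_def zf_def zc_def by simp
qed

end
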